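(* Let $G$ be a Polish group, $X$ a Polish space with a continuous $G$-action, and $F\subseteq E^X_G$ a Borel equivalence relation on $X$ such that each $E^X_G$-class contains at most countably many $F$-classes. Then $E^X_G$ is a Borel subset of $X\times X$.
   Context: $E^X_G=\{(x,y):\exists g\in G\ g\cdot x=y\}$ is the orbit equivalence relation. *)

theory Defs
  imports "HOL-Analysis.Analysis"
begin

definition polish_group :: "('g::polish_space \<Rightarrow> 'g \<Rightarrow> 'g) \<Rightarrow> 'g \<Rightarrow> ('g \<Rightarrow> 'g) \<Rightarrow> bool" where
  "polish_group gm e gi \<longleftrightarrow>
     (\<forall>a b c. gm (gm a b) c = gm a (gm b c)) \<and>
     (\<forall>a. gm e a = a \<and> gm a e = a) \<and>
     (\<forall>a. gm (gi a) a = e \<and> gm a (gi a) = e) \<and>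
     continuous_on UNIV (\<lambda>p. gm (fst p) (snd p)) \<and>
     continuous_on UNIV gi"

definition continuous_group_action ::
  "('g \<Rightarrow> 'g \<Rightarrow> 'g) \<Rightarrow> 'g \<Rightarrow> ('g::topological_space \<Rightarrow> 'x::topological_space \<Rightarrow> 'x) \<Rightarrow> bool" where
  "continuous_group_action gm e act \<longleftrightarrow>
     (\<forall>x. act e x = x) \<and>
     (\<forall>g h x. act (gm g h) x = act g (act h x)) \<and>
     continuous_on UNIV (\<lambda>p. act (fst p) (snd p))"

definition orbit_eqrel :: "('g \<Rightarrow> 'x \<Rightarrow> 'x) \<Rightarrow> ('x \<times> 'x) set" where
  "orbit_eqrel act = {(x, y). \<exists>g. act g x = y}"

end

theory Submission
  imports Defs
begin
definition meager :: "'a::topological_space set \<Rightarrow> bool" where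
  "meager S \<longleftrightarrow> (\<exists>\<N>. countable \<N> \<and> (\<forall>N\<in>\<N>. closed N \<and> interior N = {}) \<and> S \<subseteq> \<Union>\<N>)"

lemma meager_subset: "meager T \<Longrightarrow> S \<subseteq> T \<Longrightarrow> meager S"
  unfolding meager_def by (meson order.trans)

lemma meager_empty: "meager {}"
  unfolding meager_def by (rule exI[of _ "{}"]) auto

lemma meager_nwd: "closed N \<Longrightarrow> interior N = {} \<Longrightarrow> meager N"
  unfolding meager_def by (rule exI[of _ "{N}"]) auto

lemma meager_UN:
  assumes "countable I" "\<And>i. i \<in> I \<Longrightarrow> meager (A i)"
  shows "meager (\<Union>i\<in>I. A i)"
proof -
  have "\<forall>i\<in>I. \<exists>\<N>. countable \<N> \<and> (\<forall>N\<in>\<N>. closed N \<and> interior N = {}) \<and> A i \<subseteq> \<Union>\<N>"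
    using assms(2) unfolding meager_def by simp
  from bchoice[OF this] obtain NN where NN: "\<forall>i\<in>I. countable (NN i) \<and> (\<forall>N\<in>NN i. closed N \<and> interior N = {}) \<and> A i \<subseteq> \<Union>(NN i)"
    by blast
  show ?thesis unfolding meager_def
  proof (intro exI[of _ "\<Union>i\<in>I. NN i"] conjI)
    show "countable (\<Union>i\<in>I. NN i)" using NN assms(1) by (intro countable_UN) auto
    show "\<forall>N\<in>\<Union>i\<in>I. NN i. closed N \<and> interior N = {}" using NN by simp
    show "(\<Union>i\<in>I. A i) \<subseteq> \<Union>(\<Union>i\<in>I. NN i)"
    proof
      fix x assume "x \<in> (\<Union>i\<in>I. A i)"
      then obtain i where i: "i \<in> I" "x \<in> A i" by blast
      then have "x \<in> \<Union>(NN i)" using NN by blast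
      then show "x \<in> \<Union>(\<Union>i\<in>I. NN i)" using i(1) by blast
    qed
  qed
qed

lemma meager_Un: "meager A \<Longrightarrow> meager B \<Longrightarrow> meager (A \<union> B)"
proof -
  assume a: "meager A" "meager B"
  have "meager (\<Union>b\<in>{True,False}. if b then A else B)" by (rule meager_UN) (use a in auto)
  moreover have "(\<Union>b\<in>{True,False}. if b then A else B) = A \<union> B" by auto
  ultimately show ?thesis by simp
qed

lemma not_meager_open:
  fixes U :: "'a::complete_space set"
  assumes "open U" "U \<noteq> {}"
  shows "\<not> meager U"
proof
  assume "meager U"
  then obtain \<N> where N: "countable \<N>" "\<forall>N\<in>\<N>. closed N \<and> interior N = {}" "U \<subseteq> \<Union>\<N>"
    unfolding meager_def by (meson order.trans)
  have "euclidean interior_of \<Union>\<N> = {}"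
    by (rule Baire_category_alt) (use N completely_metrizable_space_euclidean in auto)
  then have "interior (\<Union>\<N>) = {}" by simp
  moreover have "U \<subseteq> interior (\<Union>\<N>)" using N(3) assms(1) interior_maximal by blast
  ultimately show False using assms(2) by blast
qed

definition bp :: "'a::topological_space set \<Rightarrow> bool" where
  "bp S \<longleftrightarrow> (\<exists>V. open V \<and> meager ((S - V) \<union> (V - S)))"

lemma bp_open: "open S \<Longrightarrow> bp S"
  unfolding bp_def by (rule exI[of _ S]) (auto simp: meager_empty)

lemma bp_compl:
  assumes "bp S" shows "bp (- S)"
proof -
  obtain V where V: "open V" "meager ((S - V) \<union> (V - S))" using assms unfolding bp_def by blast
  define K where "K = - V - interior (- V)"
  have "closed K" unfolding K_def using V(1) by (intro closed_Diff) (auto simp: open_closed)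
  moreover have "interior K = {}"
  proof -
    have "interior K \<subseteq> interior (- V)" unfolding K_def by (rule interior_mono) auto
    moreover have "interior K \<subseteq> K" by (rule interior_subset)
    ultimately show ?thesis unfolding K_def by blast
  qed
  ultimately have "meager K" by (rule meager_nwd)
  then have "meager (((S - V) \<union> (V - S)) \<union> K)" using V(2) meager_Un by blast
  moreover have "((- S) - interior (- V)) \<union> (interior (- V) - (- S)) \<subseteq> ((S - V) \<union> (V - S)) \<union> K"
    unfolding K_def using interior_subset[of "- V"] by blast
  ultimately show ?thesis unfolding bp_def
    by (intro exI[of _ "interior (- V)"]) (auto intro: meager_subset)
qed

lemma bp_UN:
  assumes "\<And>n::nat. bp (A n)" shows "bp (\<Union>n. A n)"
proof -
  obtain V where V: "\<And>n. open (V n) \<and> meager ((A n - V n) \<union> (V n - A n))"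
    using assms unfolding bp_def by metis
  have "meager (\<Union>n. (A n - V n) \<union> (V n - A n))" by (rule meager_UN) (use V in auto)
  moreover have "((\<Union>n. A n) - (\<Union>n. V n)) \<union> ((\<Union>n. V n) - (\<Union>n. A n)) \<subseteq> (\<Union>n. (A n - V n) \<union> (V n - A n))"
    by blast
  ultimately show ?thesis unfolding bp_def
    by (intro exI[of _ "\<Union>n. V n"]) (use V in \<open>auto intro: meager_subset\<close>)
qed

lemma bp_borel:
  assumes "S \<in> sets borel" shows "bp S"
proof -
  have "S \<in> sigma_sets UNIV {S. open S}" using assms by (simp add: sets_borel)
  then show ?thesis
  proof induction
    case (Basic a) then show ?case by (auto intro: bp_open)
  next
    case Empty then show ?case by (auto intro: bp_open)
  next
    case (Compl a) then show ?case using bp_compl by (metis Compl_eq_Diff_UNIV)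
  next
    case (Union a) then show ?case using bp_UN by blast
  qed
qed

lemma bp_basic:
  assumes "topological_basis Bs" "bp S" "open U" "\<not> meager (U \<inter> S)"
  shows "\<exists>W\<in>Bs. W \<noteq> {} \<and> W \<subseteq> U \<and> meager (W - S)"
proof -
  obtain V where V: "open V" "meager ((S - V) \<union> (V - S))" using assms(2) unfolding bp_def by blast
  have "U \<inter> V \<noteq> {}"
  proof
    assume "U \<inter> V = {}"
    then have "U \<inter> S \<subseteq> (S - V) \<union> (V - S)" by blast
    then show False using assms(4) V(2) meager_subset by blast
  qed
  then obtain x where x: "x \<in> U \<inter> V" by blast
  obtain W where W: "W \<in> Bs" "x \<in> W" "W \<subseteq> U \<inter> V"
    using topological_basisE[OF assms(1), of "U \<inter> V" x] x V(1) assms(3) by blast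
  have "W - S \<subseteq> (S - V) \<union> (V - S)" using W by blast
  then have "meager (W - S)" using V(2) meager_subset by blast
  then show ?thesis using W by blast
qed

lemma compl_char:
  fixes S :: "'a::complete_space set"
  assumes "topological_basis Bs" "bp S" "open U"
  shows "meager (U \<inter> S) \<longleftrightarrow> (\<forall>W\<in>Bs. W \<noteq> {} \<and> W \<subseteq> U \<longrightarrow> \<not> meager (W - S))"
proof
  assume m: "meager (U \<inter> S)"
  show "\<forall>W\<in>Bs. W \<noteq> {} \<and> W \<subseteq> U \<longrightarrow> \<not> meager (W - S)"
  proof (intro ballI impI notI)
    fix W assume W: "W \<in> Bs" "W \<noteq> {} \<and> W \<subseteq> U" "meager (W - S)"
    have "W \<subseteq> (W - S) \<union> (U \<inter> S)" using W by blast
    then have "meager W" using meager_Un[OF W(3) m] meager_subset by blast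
    moreover have "open W" using W(1) assms(1) topological_basis_open by blast
    ultimately show False using not_meager_open W(2) by blast
  qed
next
  assume h: "\<forall>W\<in>Bs. W \<noteq> {} \<and> W \<subseteq> U \<longrightarrow> \<not> meager (W - S)"
  show "meager (U \<inter> S)"
  proof (rule ccontr)
    assume "\<not> meager (U \<inter> S)"
    then obtain W where "W\<in>Bs" "W \<noteq> {}" "W \<subseteq> U" "meager (W - S)"
      using bp_basic[OF assms] by blast
    then show False using h by blast
  qed
qed

lemma union_char:
  fixes A :: "nat \<Rightarrow> 'a::complete_space set"
  assumes "topological_basis Bs" "\<And>n. bp (A n)" "open U"
  shows "meager (U - (\<Union>n. A n)) \<longleftrightarrow>
    (\<forall>W\<in>Bs. W \<noteq> {} \<and> W \<subseteq> U \<longrightarrow> (\<exists>n. \<exists>V\<in>Bs. V \<noteq> {} \<and> V \<subseteq> W \<and> meager (V - A n)))"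
proof
  assume m: "meager (U - (\<Union>n. A n))"
  show "\<forall>W\<in>Bs. W \<noteq> {} \<and> W \<subseteq> U \<longrightarrow> (\<exists>n. \<exists>V\<in>Bs. V \<noteq> {} \<and> V \<subseteq> W \<and> meager (V - A n))"
  proof (intro ballI impI)
    fix W assume W: "W \<in> Bs" "W \<noteq> {} \<and> W \<subseteq> U"
    have oW: "open W" using W(1) assms(1) topological_basis_open by blast
    have "\<exists>n. \<not> meager (W \<inter> A n)"
    proof (rule ccontr)
      assume "\<not> (\<exists>n. \<not> meager (W \<inter> A n))"
      then have "meager (\<Union>n. W \<inter> A n)" by (intro meager_UN) auto
      then have "meager ((U - (\<Union>n. A n)) \<union> (\<Union>n. W \<inter> A n))" by (rule meager_Un[OF m])
      moreover have "W \<subseteq> (U - (\<Union>n. A n)) \<union> (\<Union>n. W \<inter> A n)" using W by blast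
      ultimately have "meager W" by (rule meager_subset)
      then show False using not_meager_open oW W(2) by blast
    qed
    then obtain n where "\<not> meager (W \<inter> A n)" by blast
    then obtain V where "V\<in>Bs" "V \<noteq> {}" "V \<subseteq> W" "meager (V - A n)"
      using bp_basic[OF assms(1) assms(2) oW] by blast
    then show "\<exists>n. \<exists>V\<in>Bs. V \<noteq> {} \<and> V \<subseteq> W \<and> meager (V - A n)" by blast
  qed
next
  assume h: "\<forall>W\<in>Bs. W \<noteq> {} \<and> W \<subseteq> U \<longrightarrow> (\<exists>n. \<exists>V\<in>Bs. V \<noteq> {} \<and> V \<subseteq> W \<and> meager (V - A n))"
  show "meager (U - (\<Union>n. A n))"
  proof (rule ccontr)
    assume nm: "\<not> meager (U - (\<Union>n. A n))"
    have "bp (- (\<Union>n. A n))" by (intro bp_compl bp_UN assms(2))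
    moreover have "U \<inter> - (\<Union>n. A n) = U - (\<Union>n. A n)" by blast
    ultimately obtain W where W: "W\<in>Bs" "W \<noteq> {}" "W \<subseteq> U" "meager (W - - (\<Union>n. A n))"
      using bp_basic[OF assms(1) _ assms(3), of "- (\<Union>n. A n)"] nm by auto
    then obtain n V where V: "V\<in>Bs" "V \<noteq> {}" "V \<subseteq> W" "meager (V - A n)" using h by blast
    have "V \<subseteq> (V - A n) \<union> (W - - (\<Union>n. A n))" using V by blast
    then have "meager V" by (rule meager_subset[OF meager_Un[OF V(4) W(4)]])
    moreover have "open V" using V(1) assms(1) topological_basis_open by blast
    ultimately show False using not_meager_open V(2) by blast
  qed
qed

lemma montgomery:
  fixes B :: "('z \<times> 'y::{complete_space, second_countable_topology}) set"
  assumes Bs: "countable Bs" "topological_basis Bs"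
    and B: "B \<in> sets (M \<Otimes>\<^sub>M borel)"
  shows "\<forall>U\<in>Bs. {z\<in>space M. meager (U - Pair z -` B)} \<in> sets M"
proof -
  have oB: "\<And>U. U \<in> Bs \<Longrightarrow> open U" using Bs(2) topological_basis_open by blast
  have "B \<in> sigma_sets (space M \<times> space borel) {a \<times> b | a b. a \<in> sets M \<and> b \<in> sets borel}"
    using B by (simp add: sets_pair_measure)
  then show ?thesis
  proof induction
    case (Basic ab)
    then obtain a b where ab: "ab = a \<times> b" "a \<in> sets M" "b \<in> sets borel" by blast
    show ?case
    proof
      fix U assume "U \<in> Bs"
      have "{z\<in>space M. meager (U - Pair z -` ab)} =
          {z\<in>space M. (z \<in> a \<and> meager (U - b)) \<or> (z \<notin> a \<and> meager U)}"
        using ab(1) by auto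
      also have "\<dots> \<in> sets M" using ab(2) by measurable
      finally show "{z\<in>space M. meager (U - Pair z -` ab)} \<in> sets M" .
    qed
  next
    case Empty
    show ?case
    proof
      fix U assume "U \<in> Bs"
      have "{z\<in>space M. meager (U - Pair z -` {})} = {z\<in>space M. meager U}" by auto
      also have "\<dots> \<in> sets M" by measurable
      finally show "{z\<in>space M. meager (U - Pair z -` {})} \<in> sets M" .
    qed
  next
    case (Compl a)
    have sec: "Pair z -` a \<in> sets borel" for z
      using Compl(1) sets_Pair1[of a M borel z] by (simp add: sets_pair_measure)
    show ?case
    proof
      fix U assume U: "U \<in> Bs"
      have "{z\<in>space M. meager (U - Pair z -` (space M \<times> space borel - a))} =
        {z\<in>space M. \<forall>W\<in>{W\<in>Bs. W \<noteq> {} \<and> W \<subseteq> U}. \<not> meager (W - Pair z -` a)}"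
      proof -
        have "meager (U - Pair z -` (space M \<times> space borel - a)) \<longleftrightarrow> meager (U \<inter> Pair z -` a)"
          if "z \<in> space M" for z
        proof -
          have "U - Pair z -` (space M \<times> space borel - a) = U \<inter> Pair z -` a" using that by auto
          then show ?thesis by simp
        qed
        then show ?thesis
          using compl_char[OF Bs(2) bp_borel[OF sec] oB[OF U]] by auto
      qed
      also have "\<dots> \<in> sets M"
        apply (rule sets.sets_Collect_countable_All')
         apply (rule sets.sets_Collect_neg)
        using Compl(2) Bs(1) by auto
      finally show "{z\<in>space M. meager (U - Pair z -` (space M \<times> space borel - a))} \<in> sets M" .
    qed
  next
    case (Union A)
    have sec: "Pair z -` A n \<in> sets borel" for z n
      using Union(1) sets_Pair1[of "A n" M borel z] by (simp add: sets_pair_measure)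
    show ?case
    proof
      fix U assume U: "U \<in> Bs"
      have "{z\<in>space M. meager (U - Pair z -` (\<Union>(range A)))} =
        {z\<in>space M. \<forall>W\<in>{W\<in>Bs. W \<noteq> {} \<and> W \<subseteq> U}. \<exists>n\<in>(UNIV::nat set).
           \<exists>V\<in>{V\<in>Bs. V \<noteq> {} \<and> V \<subseteq> W}. meager (V - Pair z -` A n)}"
      proof -
        have "meager (U - Pair z -` (\<Union>(range A))) \<longleftrightarrow> (\<forall>W\<in>{W\<in>Bs. W \<noteq> {} \<and> W \<subseteq> U}. \<exists>n\<in>(UNIV::nat set).
           \<exists>V\<in>{V\<in>Bs. V \<noteq> {} \<and> V \<subseteq> W}. meager (V - Pair z -` A n))" for z
        proof -
          have eq: "Pair z -` (\<Union>(range A)) = (\<Union>n. Pair z -` A n)" by auto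
          have uc: "meager (U - (\<Union>n. Pair z -` A n)) \<longleftrightarrow>
    (\<forall>W\<in>Bs. W \<noteq> {} \<and> W \<subseteq> U \<longrightarrow> (\<exists>n. \<exists>V\<in>Bs. V \<noteq> {} \<and> V \<subseteq> W \<and> meager (V - Pair z -` A n)))"
            by (rule union_char[OF Bs(2), of "\<lambda>n. Pair z -` A n", OF bp_borel[OF sec] oB[OF U]])
          show ?thesis unfolding eq uc
            by (simp only: Ball_def Bex_def mem_Collect_eq UNIV_I simp_thms) meson
        qed
        then show ?thesis by simp
      qed
      also have "\<dots> \<in> sets M"
        apply (rule sets.sets_Collect_countable_All')
         apply (rule sets.sets_Collect_countable_Ex')
          apply (rule sets.sets_Collect_countable_Ex')
        using Union(2) Bs(1) by auto
      finally show "{z\<in>space M. meager (U - Pair z -` (\<Union>(range A)))} \<in> sets M" .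
    qed
  qed
qed

lemma meager_times1:
  assumes "meager M" shows "meager (M \<times> (UNIV :: 'b::topological_space set))"
proof -
  obtain \<N> where N: "countable \<N>" "\<forall>N\<in>\<N>. closed N \<and> interior N = {}" "M \<subseteq> \<Union>\<N>"
    using assms unfolding meager_def by blast
  show ?thesis unfolding meager_def
    apply (rule exI[of _ "(\<lambda>N. N \<times> (UNIV :: 'b set)) ` \<N>"])
    using N by (auto simp: interior_Times closed_Times)
qed

lemma meager_times2:
  assumes "meager M" shows "meager ((UNIV :: 'b::topological_space set) \<times> M)"
proof -
  obtain \<N> where N: "countable \<N>" "\<forall>N\<in>\<N>. closed N \<and> interior N = {}" "M \<subseteq> \<Union>\<N>"
    using assms unfolding meager_def by blast
  show ?thesis unfolding meager_def
    apply (rule exI[of _ "(\<lambda>N. (UNIV :: 'b set) \<times> N) ` \<N>"])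
    using N by (auto simp: interior_Times closed_Times)
qed

lemma meager_homeo:
  assumes f: "continuous_on UNIV f" and g: "continuous_on UNIV g"
    and gf: "\<And>x. g (f x) = x" and fg: "\<And>y. f (g y) = y" and m: "meager S"
  shows "meager (f -` S)"
proof -
  obtain \<N> where N: "countable \<N>" "\<forall>N\<in>\<N>. closed N \<and> interior N = {}" "S \<subseteq> \<Union>\<N>"
    using m unfolding meager_def by blast
  have "interior (f -` N) = {}" if "N \<in> \<N>" for N
  proof (rule ccontr)
    assume "interior (f -` N) \<noteq> {}"
    then obtain x where x: "x \<in> interior (f -` N)" by blast
    have "open (g -` interior (f -` N))" using g by (intro open_vimage) auto
    moreover have "g -` interior (f -` N) \<subseteq> N"
      using interior_subset[of "f -` N"] fg by auto
    ultimately have "g -` interior (f -` N) \<subseteq> interior N" using interior_maximal by blast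
    moreover have "f x \<in> g -` interior (f -` N)" using x gf by simp
    ultimately show False using N(2) that by blast
  qed
  moreover have "f -` S \<subseteq> \<Union>((\<lambda>N. f -` N) ` \<N>)" using N(3) by blast
  ultimately show ?thesis unfolding meager_def
    apply (intro exI[of _ "(\<lambda>N. f -` N) ` \<N>"])
    using N f by (auto intro: closed_vimage)
qed

lemma cont2:
  assumes "continuous_on UNIV (\<lambda>p. f (fst p) (snd p))" "continuous_on UNIV a" "continuous_on UNIV b"
  shows "continuous_on UNIV (\<lambda>x. f (a x) (b x))"
  using continuous_on_compose2[OF assms(1) continuous_on_Pair[OF assms(2,3)]] by simp

theorem mainTheorem9:
  fixes gm :: "'g::polish_space \<Rightarrow> 'g \<Rightarrow> 'g" and e :: 'g and gi :: "'g \<Rightarrow> 'g"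
    and act :: "'g \<Rightarrow> 'x::polish_space \<Rightarrow> 'x"
    and F :: "('x \<times> 'x) set"
  assumes "polish_group gm e gi"
    and "continuous_group_action gm e act"
    and "equiv UNIV F"
    and "F \<in> sets borel"
    and "F \<subseteq> orbit_eqrel act"
    and "\<forall>x. countable {F `` {y} | y. (x, y) \<in> orbit_eqrel act}"
  shows "orbit_eqrel act \<in> sets borel"
proof -
  note gp = assms(1)[unfolded polish_group_def]
  note ga = assms(2)[unfolded continuous_group_action_def]
  have assoc: "gm (gm a b) c = gm a (gm b c)" for a b c using gp by blast
  have unit: "gm e a = a" "gm a e = a" for a using gp by blast+
  have inv: "gm (gi a) a = e" "gm a (gi a) = e" for a using gp by blast+
  have cM: "continuous_on UNIV (\<lambda>p. gm (fst p) (snd p))" using gp by blast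
  have aE: "act e x = x" for x using ga by blast
  have aM: "act (gm g h) x = act g (act h x)" for g h x using ga by blast
  have cA: "continuous_on UNIV (\<lambda>p. act (fst p) (snd p))" using ga by blast
  have eq: "equiv UNIV F" by (rule assms(3))
  have Fsym: "(a, b) \<in> F \<Longrightarrow> (b, a) \<in> F" for a b using eq unfolding equiv_def sym_def by blast
  have Ftrans: "(a, b) \<in> F \<Longrightarrow> (b, c) \<in> F \<Longrightarrow> (a, c) \<in> F" for a b c
    using eq unfolding equiv_def trans_def by blast
  have Frefl: "(a, a) \<in> F" for a using eq unfolding equiv_def refl_on_def by blast
  define E where "E = orbit_eqrel act"
  have Erel: "(x, y) \<in> E" if xy: "(act g x, act h y) \<in> F" for x y g h
  proof -
    obtain k where k: "act k (act g x) = act h y"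
      using assms(5) xy unfolding orbit_eqrel_def by auto
    have "act (gm (gi h) (gm k g)) x = y"
      using k by (simp add: aM) (metis aM inv(1) aE)
    then show ?thesis unfolding E_def orbit_eqrel_def by blast
  qed
  define Q where "Q = {p :: ('x \<times> 'x) \<times> ('g \<times> 'g).
     (act (fst (snd p)) (fst (fst p)), act (snd (snd p)) (snd (fst p))) \<in> F}"
  have contphi: "continuous_on UNIV (\<lambda>p :: ('x \<times> 'x) \<times> ('g \<times> 'g).
     (act (fst (snd p)) (fst (fst p)), act (snd (snd p)) (snd (fst p))))"
    by (intro continuous_on_Pair cont2[OF cA]) (auto intro!: continuous_intros)
  have "Q \<in> sets borel"
  proof -
    have "Q = (\<lambda>p :: ('x \<times> 'x) \<times> ('g \<times> 'g).
     (act (fst (snd p)) (fst (fst p)), act (snd (snd p)) (snd (fst p)))) -` F \<inter> space borel"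
      unfolding Q_def by auto
    also have "\<dots> \<in> sets borel"
      by (rule measurable_sets[OF borel_measurable_continuous_onI[OF contphi] assms(4)])
    finally show ?thesis .
  qed
  then have Qs: "Q \<in> sets (borel \<Otimes>\<^sub>M borel)" unfolding borel_prod .
  obtain Bs :: "('g \<times> 'g) set set" where Bs: "countable Bs" "topological_basis Bs"
    using ex_countable_basis by blast
  obtain Bg :: "'g set set" where Bg: "countable Bg" "topological_basis Bg"
    using ex_countable_basis by blast
  have charE: "E = {z \<in> space borel. \<exists>W\<in>{W\<in>Bs. W \<noteq> {}}. meager (W - Pair z -` Q)}"
  proof (intro set_eqI iffI)
    fix z assume "z \<in> {z \<in> space borel. \<exists>W\<in>{W\<in>Bs. W \<noteq> {}}. meager (W - Pair z -` Q)}"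
    then obtain W where W: "W \<in> Bs" "W \<noteq> {}" "meager (W - Pair z -` Q)" by blast
    have "W \<inter> Pair z -` Q \<noteq> {}"
    proof
      assume "W \<inter> Pair z -` Q = {}"
      then have "meager W" using W(3) meager_subset by blast
      moreover have "open W" using W(1) Bs(2) topological_basis_open by blast
      ultimately show False using not_meager_open W(2) by blast
    qed
    then obtain g h where "(z, (g, h)) \<in> Q" by auto
    then show "z \<in> E" using Erel[of _ "fst z" _ "snd z"] unfolding Q_def by auto
  next
    fix z assume "z \<in> E"
    then obtain x y where z: "z = (x, y)" and "(x, y) \<in> E" by (cases z) auto
    then obtain k where k: "act k x = y" unfolding E_def orbit_eqrel_def by blast
    define Cs where "Cs = {F `` {w} | w. (x, w) \<in> orbit_eqrel act}"
    have cCs: "countable Cs" using assms(6) unfolding Cs_def by blast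
    define S where "S C = {g. act g x \<in> C}" for C
    have cont_x: "continuous_on UNIV (\<lambda>g. act g x)"
      by (rule cont2[OF cA]) (auto intro!: continuous_intros)
    have SB: "S C \<in> sets borel" if CC: "C \<in> Cs" for C
    proof -
      obtain w where w: "C = F `` {w}" using CC unfolding Cs_def by blast
      have "C = Pair w -` F" using w by auto
      have "F \<in> sets (borel \<Otimes>\<^sub>M borel)" unfolding borel_prod by (rule assms(4))
      then have "Pair w -` F \<in> sets borel" by (rule sets_Pair1)
      then have "C \<in> sets borel" using \<open>C = Pair w -` F\<close> by simp
      then have "(\<lambda>g. act g x) -` C \<inter> space borel \<in> sets borel"
        by (rule measurable_sets[OF borel_measurable_continuous_onI[OF cont_x]])
      then show ?thesis unfolding S_def by (simp add: vimage_def)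
    qed
    have cov: "UNIV = (\<Union>C\<in>Cs. S C)"
    proof -
      have "g \<in> S (F `` {act g x})" for g unfolding S_def using Frefl by auto
      moreover have "F `` {act g x} \<in> Cs" for g unfolding Cs_def orbit_eqrel_def by blast
      ultimately show ?thesis by blast
    qed
    have "\<exists>C\<in>Cs. \<not> meager (S C)"
    proof (rule ccontr)
      assume "\<not> (\<exists>C\<in>Cs. \<not> meager (S C))"
      then have "meager (\<Union>C\<in>Cs. S C)" by (intro meager_UN cCs) auto
      then have "meager (UNIV :: 'g set)" using cov by simp
      then show False using not_meager_open[of "UNIV :: 'g set"] by auto
    qed
    then obtain C where C: "C \<in> Cs" "\<not> meager (S C)" by blast
    obtain w where w: "C = F `` {w}" using C(1) unfolding Cs_def by blast
    obtain U where U: "U \<in> Bg" "U \<noteq> {}" "U \<subseteq> UNIV" "meager (U - S C)"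
      using bp_basic[OF Bg(2) bp_borel[OF SB[OF C(1)]] open_UNIV] C(2) by auto
    have oU: "open U" using U(1) Bg(2) topological_basis_open by blast
    define r where "r h = gm h k" for h
    define r' where "r' h = gm h (gi k)" for h
    have cr: "continuous_on UNIV r" unfolding r_def
      by (rule cont2[OF cM]) (auto intro!: continuous_intros)
    have cr': "continuous_on UNIV r'" unfolding r'_def
      by (rule cont2[OF cM]) (auto intro!: continuous_intros)
    have rr': "r' (r h) = h" "r (r' h) = h" for h
      unfolding r_def r'_def by (simp_all add: assoc inv unit)
    define V where "V = r -` U"
    have oV: "open V" unfolding V_def using cr oU by (intro open_vimage)
    have nV: "V \<noteq> {}" using U(2) rr' unfolding V_def by (metis ex_in_conv vimage_eq)
    define T where "T = {h. act h y \<in> C}"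
    have "T = r -` S C" unfolding T_def S_def r_def using k aM by auto
    then have "V - T = r -` (U - S C)" unfolding V_def by auto
    then have mVT: "meager (V - T)" using meager_homeo[OF cr cr' rr' U(4)] by simp
    have "U \<times> V - Pair z -` Q \<subseteq> (U - S C) \<times> UNIV \<union> UNIV \<times> (V - T)"
    proof
      fix p assume p: "p \<in> U \<times> V - Pair z -` Q"
      show "p \<in> (U - S C) \<times> UNIV \<union> UNIV \<times> (V - T)"
      proof (rule ccontr)
        assume "p \<notin> (U - S C) \<times> UNIV \<union> UNIV \<times> (V - T)"
        then have "act (fst p) x \<in> C" "act (snd p) y \<in> C" using p unfolding S_def T_def by auto
        then have "(w, act (fst p) x) \<in> F" "(w, act (snd p) y) \<in> F" using w by auto
        then have "(act (fst p) x, act (snd p) y) \<in> F" using Fsym Ftrans by blast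
        then show False using p z unfolding Q_def by auto
      qed
    qed
    then have mUV: "meager (U \<times> V - Pair z -` Q)"
      using meager_Un[OF meager_times1[OF U(4)] meager_times2[OF mVT]] meager_subset by blast
    obtain u v where "u \<in> U" "v \<in> V" using U(2) nV by blast
    then obtain W where W: "W \<in> Bs" "(u, v) \<in> W" "W \<subseteq> U \<times> V"
      using topological_basisE[OF Bs(2), of "U \<times> V" "(u, v)"] oU oV by (auto intro: open_Times)
    have "meager (W - Pair z -` Q)" using mUV W(3) meager_subset[of _ "W - Pair z -` Q"] by blast
    then show "z \<in> {z \<in> space borel. \<exists>W\<in>{W\<in>Bs. W \<noteq> {}}. meager (W - Pair z -` Q)}"
      using W by auto
  qed
  have "{z \<in> space borel. \<exists>W\<in>{W\<in>Bs. W \<noteq> {}}. meager (W - Pair z -` Q)} \<in> sets borel"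
    apply (rule sets.sets_Collect_countable_Ex')
    using montgomery[OF Bs Qs] Bs(1) by auto
  then show ?thesis using charE unfolding E_def by simp
qed

end
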